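(* Let $n\ge 3$ be an integer and let $C_n$ be the cycle with $n$ vertices. Then \[ \Theta(C_n)=\begin{cases} 1 & \text{if } n=3,\\ 2 & \text{if } n=4,\\ 4 & \text{if } n\ge 5.\end{cases}\]
   Context: All graphs are finite and simple. Let $k$ be a positive integer. A graph $G=(V,E)$ is a $k$-threshold graph with thresholds $\theta_1<\theta_2<\dots<\theta_k$ (real numbers) if there is a map $r:V\to\mathbb{R}$ such that for all distinct $u,v\in V$: $uv\in E$ if and only if the inequality $\theta_i\le r(u)+r(v)$ holds for an odd number of indices $i\in\{1,\dots,k\}$. Such a map $r$ is called a $(\theta_1,\dots,\theta_k)$-representation of $G$. The threshold number $\Theta(G)$ is the smallest positive integer $k$ such that $G$ is a $k$-threshold graph (for some choice of thresholds $\theta_1<\dots<\theta_k$). *)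

theory Defs
  imports Complex_Main
begin

definition simple_graph :: "'a set \<Rightarrow> ('a \<Rightarrow> 'a \<Rightarrow> bool) \<Rightarrow> bool" where
  "simple_graph V E \<longleftrightarrow> finite V \<and> (\<forall>u\<in>V. \<forall>v\<in>V. E u v \<longleftrightarrow> E v u) \<and> (\<forall>v\<in>V. \<not> E v v)"

text \<open>r is a (theta_1,...,theta_k)-representation, thresholds indexed 0..k-1.\<close>
definition threshold_rep ::
  "'a set \<Rightarrow> ('a \<Rightarrow> 'a \<Rightarrow> bool) \<Rightarrow> nat \<Rightarrow> (nat \<Rightarrow> real) \<Rightarrow> ('a \<Rightarrow> real) \<Rightarrow> bool" where
  "threshold_rep V E k \<theta> r \<longleftrightarrow>
     (\<forall>u\<in>V. \<forall>v\<in>V. u \<noteq> v \<longrightarrow>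
        (E u v \<longleftrightarrow> odd (card {i. i < k \<and> \<theta> i \<le> r u + r v})))"

definition k_threshold_graph :: "nat \<Rightarrow> 'a set \<Rightarrow> ('a \<Rightarrow> 'a \<Rightarrow> bool) \<Rightarrow> bool" where
  "k_threshold_graph k V E \<longleftrightarrow>
     (\<exists>\<theta> r. (\<forall>i j. i < j \<and> j < k \<longrightarrow> \<theta> i < \<theta> j) \<and> threshold_rep V E k \<theta> r)"

definition threshold_number :: "'a set \<Rightarrow> ('a \<Rightarrow> 'a \<Rightarrow> bool) \<Rightarrow> nat" where
  "threshold_number V E = (LEAST k. 0 < k \<and> k_threshold_graph k V E)"

definition cycle_edge :: "nat \<Rightarrow> nat \<Rightarrow> nat \<Rightarrow> bool" where
  "cycle_edge n u v \<longleftrightarrow> u \<noteq> v \<and> ((u + 1) mod n = v \<or> (v + 1) mod n = u)"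

end

theory Submission
  imports Defs
begin


lemma card3:
  fixes \<theta> :: "nat \<Rightarrow> real"
  assumes "\<theta> 0 < \<theta> 1" "\<theta> 1 < \<theta> 2"
  shows "odd (card {i. i < 3 \<and> \<theta> i \<le> s}) \<longleftrightarrow> (\<theta> 0 \<le> s \<and> s < \<theta> 1) \<or> \<theta> 2 \<le> s"
proof -
  have L: "i < 3 \<longleftrightarrow> i = 0 \<or> i = 1 \<or> i = (2::nat)" for i by auto
  consider "s < \<theta> 0" | "\<theta> 0 \<le> s" "s < \<theta> 1" | "\<theta> 1 \<le> s" "s < \<theta> 2" | "\<theta> 2 \<le> s" by linarith
  then show ?thesis
  proof cases
    case 1 then have "\<theta> i > s" if "i < 3" for i using that assms by (auto simp: L)
    then have E: "{i. i < 3 \<and> \<theta> i \<le> s} = {}" by force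
    show ?thesis unfolding E using 1 assms by auto
  next
    case 2 then have "{i. i < 3 \<and> \<theta> i \<le> s} = {0}" using assms by (auto simp: L)
    then show ?thesis using 2 assms by auto
  next
    case 3 then have "{i. i < 3 \<and> \<theta> i \<le> s} = {0,1}" using assms by (auto simp: L)
    then show ?thesis using 3 assms by auto
  next
    case 4 then have "{i. i < 3 \<and> \<theta> i \<le> s} = {0,1,2}" using assms by (auto simp: L)
    then show ?thesis using 4 assms by auto
  qed
qed

lemma card4:
  fixes \<theta> :: "nat \<Rightarrow> real"
  assumes "\<theta> 0 < \<theta> 1" "\<theta> 1 < \<theta> 2" "\<theta> 2 < \<theta> 3"
  shows "odd (card {i. i < 4 \<and> \<theta> i \<le> s}) \<longleftrightarrow> (\<theta> 0 \<le> s \<and> s < \<theta> 1) \<or> (\<theta> 2 \<le> s \<and> s < \<theta> 3)"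
proof -
  have L: "i < 4 \<longleftrightarrow> i = 0 \<or> i = 1 \<or> i = (2::nat) \<or> i = 3" for i by auto
  consider "s < \<theta> 0" | "\<theta> 0 \<le> s" "s < \<theta> 1" | "\<theta> 1 \<le> s" "s < \<theta> 2" | "\<theta> 2 \<le> s" "s < \<theta> 3" | "\<theta> 3 \<le> s" by linarith
  then show ?thesis
  proof cases
    case 1 then have "\<theta> i > s" if "i < 4" for i using that assms by (auto simp: L)
    then have E: "{i. i < 4 \<and> \<theta> i \<le> s} = {}" by force
    show ?thesis unfolding E using 1 assms by auto
  next
    case 2 then have "{i. i < 4 \<and> \<theta> i \<le> s} = {0}" using assms by (auto simp: L)
    then show ?thesis using 2 assms by auto
  next
    case 3 then have "{i. i < 4 \<and> \<theta> i \<le> s} = {0,1}" using assms by (auto simp: L)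
    then show ?thesis using 3 assms by auto
  next
    case 4 then have "{i. i < 4 \<and> \<theta> i \<le> s} = {0,1,2}" using assms by (auto simp: L)
    then show ?thesis using 4 assms by auto
  next
    case 5 then have "{i. i < 4 \<and> \<theta> i \<le> s} = {0,1,2,3}" using assms by (auto simp: L)
    then show ?thesis using 5 assms by auto
  qed
qed

lemma card1:
  fixes \<theta> :: "nat \<Rightarrow> real"
  shows "odd (card {i. i < 1 \<and> \<theta> i \<le> s}) \<longleftrightarrow> \<theta> 0 \<le> s"
proof -
  have "{i. i < 1 \<and> \<theta> i \<le> s} = (if \<theta> 0 \<le> s then {0} else {})" by auto
  then show ?thesis by auto
qed

lemma card2:
  fixes \<theta> :: "nat \<Rightarrow> real"
  assumes "\<theta> 0 < \<theta> 1"
  shows "odd (card {i. i < 2 \<and> \<theta> i \<le> s}) \<longleftrightarrow> \<theta> 0 \<le> s \<and> s < \<theta> 1"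
proof -
  have L: "i < 2 \<longleftrightarrow> i = 0 \<or> i = (1::nat)" for i by auto
  consider "s < \<theta> 0" | "\<theta> 0 \<le> s" "s < \<theta> 1" | "\<theta> 1 \<le> s" by linarith
  then show ?thesis
  proof cases
    case 1 then have "\<theta> i > s" if "i < 2" for i using that assms by (auto simp: L)
    then have E: "{i. i < 2 \<and> \<theta> i \<le> s} = {}" by force
    show ?thesis unfolding E using 1 assms by auto
  next
    case 2 then have "{i. i < 2 \<and> \<theta> i \<le> s} = {0}" using assms by (auto simp: L)
    then show ?thesis using 2 assms by auto
  next
    case 3 then have "{i. i < 2 \<and> \<theta> i \<le> s} = {0,1}" using assms by (auto simp: L)
    then show ?thesis using 3 assms by auto
  qed
qed

lemma kt_mono:
  assumes fin: "finite V" and kt: "k_threshold_graph k V E" and k: "0 < k"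
  shows "k_threshold_graph (Suc k) V E"
proof -
  obtain \<theta> r where inc: "\<forall>i j. i < j \<and> j < k \<longrightarrow> \<theta> i < \<theta> j" and rep: "threshold_rep V E k \<theta> r"
    using kt unfolding k_threshold_graph_def by blast
  define S where "S = (\<Sum>v\<in>V. \<bar>r v\<bar>)"
  define B where "B = \<bar>\<theta> (k-1)\<bar> + 2 * S + 1"
  define \<theta>' where "\<theta>' = \<theta>(k := B)"
  have S0: "S \<ge> 0" unfolding S_def by (simp add: sum_nonneg)
  have le: "\<theta> i \<le> \<theta> (k-1)" if "i < k" for i
    using inc that by (cases "i = k - 1") (auto, metis One_nat_def Suc_pred k less_Suc_eq less_imp_le)
  have inc': "\<forall>i j. i < j \<and> j < Suc k \<longrightarrow> \<theta>' i < \<theta>' j"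
  proof (intro allI impI)
    fix i j assume ij: "i < j \<and> j < Suc k"
    show "\<theta>' i < \<theta>' j"
    proof (cases "j = k")
      case True
      then have "\<theta>' i = \<theta> i" "\<theta>' j = B" using ij by (auto simp: \<theta>'_def)
      moreover have "\<theta> i \<le> \<theta> (k-1)" using le ij True by auto
      ultimately show ?thesis unfolding B_def using S0 by linarith
    next
      case False
      then show ?thesis using ij inc by (auto simp: \<theta>'_def)
    qed
  qed
  have rep': "threshold_rep V E (Suc k) \<theta>' r"
    unfolding threshold_rep_def
  proof (intro ballI impI)
    fix u v assume uv: "u \<in> V" "v \<in> V" "u \<noteq> v"
    have "\<bar>r u\<bar> \<le> S" "\<bar>r v\<bar> \<le> S" unfolding S_def
      using uv fin by (auto intro!: member_le_sum)
    then have "r u + r v < B" unfolding B_def by linarith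
    then have "{i. i < Suc k \<and> \<theta>' i \<le> r u + r v} = {i. i < k \<and> \<theta> i \<le> r u + r v}"
      by (auto simp: \<theta>'_def less_Suc_eq)
    then show "E u v = odd (card {i. i < Suc k \<and> \<theta>' i \<le> r u + r v})"
      using rep uv unfolding threshold_rep_def by simp
  qed
  show ?thesis unfolding k_threshold_graph_def using inc' rep' by blast
qed

lemma cyc:
  assumes "u < n" "v < n" "n \<ge> 3"
  shows "cycle_edge n u v \<longleftrightarrow> u \<noteq> v \<and> (u + 1 = v \<or> v + 1 = u \<or> (u = n - 1 \<and> v = 0) \<or> (v = n - 1 \<and> u = 0))"
proof -
  have a: "(u + 1) mod n = (if u + 1 = n then 0 else u + 1)" using assms by auto
  have b: "(v + 1) mod n = (if v + 1 = n then 0 else v + 1)" using assms by auto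
  show ?thesis unfolding cycle_edge_def a b using assms by auto
qed



definition EC :: "nat \<Rightarrow> nat \<Rightarrow> nat \<Rightarrow> bool" where
 "EC n u v \<longleftrightarrow> (u + 1 = v \<or> v + 1 = u \<or> (u = n - 1 \<and> v = 0) \<or> (v = n - 1 \<and> u = 0))"

lemma EC_sym: "EC n u v = EC n v u" unfolding EC_def by auto

definition RE :: "nat \<Rightarrow> nat \<Rightarrow> int" where
 "RE t v = (if even v then int (v div 2) else 4 * int t + 10 - int (v div 2))"
definition PE :: "nat \<Rightarrow> int \<Rightarrow> bool" where
 "PE t S \<longleftrightarrow> (3 * int t + 11 \<le> S \<and> S < 3 * int t + 12) \<or> (4 * int t + 10 \<le> S \<and> S < 4 * int t + 12)"

lemma even_ee: fixes j k t :: nat assumes "t \<ge> 3" "j < t" "k < t" 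
  shows "EC (2*t) (2*j) (2*k) \<longleftrightarrow> PE t (RE t (2*j) + RE t (2*k))"
proof -
  have "2*j+1 \<noteq> 2*k" "2*k+1 \<noteq> 2*j" "2*j \<noteq> 2*t-1" "2*k \<noteq> 2*t-1" using assms by presburger+
  then have "\<not> EC (2*t) (2*j) (2*k)" unfolding EC_def using assms by auto
  moreover have "\<not> PE t (RE t (2*j) + RE t (2*k))" unfolding PE_def RE_def using assms by simp
  ultimately show ?thesis by simp
qed

lemma even_oo: fixes j k t :: nat assumes "t \<ge> 3" "j < t" "k < t" 
  shows "EC (2*t) (2*j+1) (2*k+1) \<longleftrightarrow> PE t (RE t (2*j+1) + RE t (2*k+1))"
proof -
  have "2*j+2 \<noteq> 2*k+1" "2*k+2 \<noteq> 2*j+1" by presburger+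
  then have NE: "\<not> EC (2*t) (2*j+1) (2*k+1)" unfolding EC_def using assms by auto
  have S: "RE t (2*j+1) + RE t (2*k+1) = 8 * int t + 20 - int j - int k" unfolding RE_def by simp
  have "int j < int t" "int k < int t" "int t \<ge> 2" using assms by simp_all
  then
  have "8 * int t + 20 - int j - int k \<ge> 4 * int t + 12" by linarith
  then have "\<not> PE t (RE t (2*j+1) + RE t (2*k+1))" unfolding PE_def S by auto
  then show ?thesis using NE by simp
qed

lemma even_eo: fixes j k t :: nat assumes "t \<ge> 3" "j < t" "k < t" 
  shows "EC (2*t) (2*j) (2*k+1) \<longleftrightarrow> PE t (RE t (2*j) + RE t (2*k+1))"
proof -
  have "RE t (2*j) + RE t (2*k+1) = int j + (4 * int t + 10 - int k)" unfolding RE_def by simp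
  moreover have "EC (2*t) (2*j) (2*k+1) \<longleftrightarrow> (j = k \<or> j = k + 1 \<or> (j = 0 \<and> k = t - 1))"
  proof -
    have "2*j \<noteq> 2*t - 1" using assms by presburger
    then show ?thesis unfolding EC_def using assms by auto
  qed
  ultimately show ?thesis unfolding PE_def using assms by (simp only:) linarith
qed

lemma even_all: fixes u v t :: nat assumes "t \<ge> 3" "u < 2*t" "v < 2*t" "u \<noteq> v"
  shows "EC (2*t) u v \<longleftrightarrow> PE t (RE t u + RE t v)"
proof -
  define j where "j = u div 2"
  define p where "p = u mod 2"
  define k where "k = v div 2"
  define q where "q = v mod 2"
  have u: "u = 2*j + p" "p < 2" unfolding j_def p_def by simp_all
  have v: "v = 2*k + q" "q < 2" unfolding k_def q_def by simp_all
  have j: "j < t" and k: "k < t" using u v assms by auto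
  have "p = 0 \<or> p = 1" "q = 0 \<or> q = 1" using u v by auto
  then consider "p = 0" "q = 0" | "p = 0" "q = 1" | "p = 1" "q = 0" | "p = 1" "q = 1" by blast
  then show ?thesis
  proof cases
    case 1 then show ?thesis using even_ee[OF assms(1) j k] u v by simp
  next
    case 2 then show ?thesis using even_eo[OF assms(1) j k] u v by simp
  next
    case 3 then have "EC (2*t) v u \<longleftrightarrow> PE t (RE t v + RE t u)" 
      using even_eo[OF assms(1) k j] u v by simp
    then show ?thesis using EC_sym add.commute by metis
  next
    case 4 then show ?thesis using even_oo[OF assms(1) j k] u v by simp
  qed
qed

definition RO :: "nat \<Rightarrow> nat \<Rightarrow> int" where
 "RO t v = (if even v then 5 * int (v div 2) + (if v = 2*t then 1 else 0) else 5 * (4 * int t + 12) - 5 * int (v div 2))"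
definition PO :: "nat \<Rightarrow> int \<Rightarrow> bool" where
 "PO t S \<longleftrightarrow> (5 * int t + 1 \<le> S \<and> S < 5 * int t + 2) \<or> (5 * (4 * int t + 12) \<le> S \<and> S < 5 * (4 * int t + 12) + 10)"

lemma odd_ee: fixes j k t :: nat assumes "t \<ge> 2" "j \<le> t" "k \<le> t" "j \<noteq> k"
  shows "EC (2*t+1) (2*j) (2*k) \<longleftrightarrow> PO t (RO t (2*j) + RO t (2*k))"
proof -
  have "2*j + 1 \<noteq> 2*k" "2*k + 1 \<noteq> 2*j" by presburger+
  then have "EC (2*t+1) (2*j) (2*k) \<longleftrightarrow> (j = t \<and> k = 0) \<or> (k = t \<and> j = 0)" unfolding EC_def using assms by auto
  moreover have "RO t (2*j) + RO t (2*k) = 5 * int j + 5 * int k + (if j = t then 1 else 0) + (if k = t then 1 else 0)"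
    unfolding RO_def by simp
  moreover have nd: "5 * (int j + int k) \<noteq> 5 * int t + 1" by presburger
  ultimately show ?thesis unfolding PO_def using assms by (cases "j = t"; cases "k = t") (auto simp: algebra_simps)
qed

lemma odd_oo: fixes j k t :: nat assumes "t \<ge> 2" "j < t" "k < t" 
  shows "EC (2*t+1) (2*j+1) (2*k+1) \<longleftrightarrow> PO t (RO t (2*j+1) + RO t (2*k+1))"
proof -
  have "2*j+2 \<noteq> 2*k+1" "2*k+2 \<noteq> 2*j+1" "2*j+1 \<noteq> 2*t" "2*k+1 \<noteq> 2*t" by presburger+
  then have NE: "\<not> EC (2*t+1) (2*j+1) (2*k+1)" unfolding EC_def using assms by auto
  have S: "RO t (2*j+1) + RO t (2*k+1) = 40 * int t + 120 - 5 * int j - 5 * int k" unfolding RO_def by simp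
  have "int j < int t" "int k < int t" "int t \<ge> 2" using assms by simp_all
  then
  have "40 * int t + 120 - 5 * int j - 5 * int k \<ge> 20 * int t + 70" by linarith
  then have "\<not> PO t (RO t (2*j+1) + RO t (2*k+1))" unfolding PO_def S by (simp add: algebra_simps)
  then show ?thesis using NE by simp
qed

lemma odd_eo: fixes j k t :: nat assumes "t \<ge> 2" "j \<le> t" "k < t" 
  shows "EC (2*t+1) (2*j) (2*k+1) \<longleftrightarrow> PO t (RO t (2*j) + RO t (2*k+1))"
proof -
  have "RO t (2*j) + RO t (2*k+1) = 5 * int j + (if j = t then 1 else 0) + (5 * (4 * int t + 12) - 5 * int k)" unfolding RO_def by simp
  moreover have "EC (2*t+1) (2*j) (2*k+1) \<longleftrightarrow> (j = k \<or> j = k + 1)"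
  proof -
    have "2*k+1 \<noteq> 2*t" by presburger
    then show ?thesis unfolding EC_def using assms by auto
  qed
  ultimately show ?thesis unfolding PO_def using assms by (cases "j = t") (simp_all, linarith+)
qed

lemma odd_all: fixes u v t :: nat assumes "t \<ge> 2" "u < 2*t+1" "v < 2*t+1" "u \<noteq> v"
  shows "EC (2*t+1) u v \<longleftrightarrow> PO t (RO t u + RO t v)"
proof -
  define j where "j = u div 2"
  define p where "p = u mod 2"
  define k where "k = v div 2"
  define q where "q = v mod 2"
  have u: "u = 2*j + p" "p < 2" unfolding j_def p_def by simp_all
  have v: "v = 2*k + q" "q < 2" unfolding k_def q_def by simp_all
  have "p = 0 \<or> p = 1" "q = 0 \<or> q = 1" using u v by auto
  then consider "p = 0" "q = 0" | "p = 0" "q = 1" | "p = 1" "q = 0" | "p = 1" "q = 1" by blast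
  then show ?thesis
  proof cases
    case 1 then show ?thesis using odd_ee[OF assms(1), of j k] u v assms by simp
  next
    case 2 then show ?thesis using odd_eo[OF assms(1), of j k] u v assms by simp
  next
    case 3 then have "EC (2*t+1) v u \<longleftrightarrow> PO t (RO t v + RO t u)" 
      using odd_eo[OF assms(1), of k j] u v assms by simp
    then show ?thesis using EC_sym add.commute by metis
  next
    case 4 then show ?thesis using odd_oo[OF assms(1), of j k] u v assms by simp
  qed
qed
lemma no3_core:
  fixes q :: "nat \<Rightarrow> real" and a b c :: real and n :: nat
  assumes n: "n \<ge> 5" and ab: "a < b" and bc: "b < c"
    and rep: "\<And>i j. i < n \<Longrightarrow> j < n \<Longrightarrow> i \<noteq> j \<Longrightarrow> EC n i j \<longleftrightarrow> ((a \<le> q i + q j \<and> q i + q j < b) \<or> c \<le> q i + q j)"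
    and mx: "\<And>i. i < n \<Longrightarrow> q i \<le> q 0"
  shows False
proof -
  have E: "(a \<le> q i + q j \<and> q i + q j < b) \<or> c \<le> q i + q j" if "i < n" "j < n" "i \<noteq> j" "EC n i j" for i j
    using rep that by blast
  have N: "\<not>((a \<le> q i + q j \<and> q i + q j < b) \<or> c \<le> q i + q j)" if "i < n" "j < n" "i \<noteq> j" "\<not> EC n i j" for i j
    using rep that by blast
  have e01: "(a \<le> q 0 + q 1 \<and> q 0 + q 1 < b) \<or> c \<le> q 0 + q 1" by (rule E) (use n in \<open>auto simp: EC_def\<close>)
  have e0n: "(a \<le> q 0 + q (n-1) \<and> q 0 + q (n-1) < b) \<or> c \<le> q 0 + q (n-1)" by (rule E) (use n in \<open>auto simp: EC_def\<close>)
  have e12: "(a \<le> q 1 + q 2 \<and> q 1 + q 2 < b) \<or> c \<le> q 1 + q 2" by (rule E) (use n in \<open>auto simp: EC_def\<close>)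
  have e23: "(a \<le> q 2 + q 3 \<and> q 2 + q 3 < b) \<or> c \<le> q 2 + q 3" by (rule E) (use n in \<open>auto simp: EC_def\<close>)
  have e34: "(a \<le> q (n-3) + q (n-2) \<and> q (n-3) + q (n-2) < b) \<or> c \<le> q (n-3) + q (n-2)" by (rule E) (use n in \<open>auto simp: EC_def\<close>)
  have e45: "(a \<le> q (n-2) + q (n-1) \<and> q (n-2) + q (n-1) < b) \<or> c \<le> q (n-2) + q (n-1)" by (rule E) (use n in \<open>auto simp: EC_def\<close>)
  have n02: "\<not>((a \<le> q 0 + q 2 \<and> q 0 + q 2 < b) \<or> c \<le> q 0 + q 2)" by (rule N) (use n in \<open>auto simp: EC_def\<close>)
  have n03: "\<not>((a \<le> q 0 + q 3 \<and> q 0 + q 3 < b) \<or> c \<le> q 0 + q 3)" by (rule N) (use n in \<open>auto simp: EC_def\<close>)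
  have n0a: "\<not>((a \<le> q 0 + q (n-3) \<and> q 0 + q (n-3) < b) \<or> c \<le> q 0 + q (n-3))" by (rule N) (use n in \<open>auto simp: EC_def\<close>)
  have n0b: "\<not>((a \<le> q 0 + q (n-2) \<and> q 0 + q (n-2) < b) \<or> c \<le> q 0 + q (n-2))" by (rule N) (use n in \<open>auto simp: EC_def\<close>)
  have n1b: "\<not>((a \<le> q 1 + q (n-2) \<and> q 1 + q (n-2) < b) \<or> c \<le> q 1 + q (n-2))" by (rule N) (use n in \<open>auto simp: EC_def\<close>)
  have n2c: "\<not>((a \<le> q 2 + q (n-1) \<and> q 2 + q (n-1) < b) \<or> c \<le> q 2 + q (n-1))" by (rule N) (use n in \<open>auto simp: EC_def\<close>)
  have n1c: "\<not>((a \<le> q 1 + q (n-1) \<and> q 1 + q (n-1) < b) \<or> c \<le> q 1 + q (n-1))" by (rule N) (use n in \<open>auto simp: EC_def\<close>)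
  have m: "q 1 \<le> q 0" "q 2 \<le> q 0" "q 3 \<le> q 0" "q (n-3) \<le> q 0" "q (n-2) \<le> q 0" "q (n-1) \<le> q 0"
    using mx n by auto
  show False using e01 e0n e12 e23 e34 e45 n02 n03 n0a n0b n1b n2c n1c m ab bc
    by smt
qed

lemma cyc':
  assumes "u < n" "v < n" "n \<ge> 3"
  shows "cycle_edge n u v \<longleftrightarrow> u \<noteq> v \<and> EC n u v"
  using cyc[OF assms] unfolding EC_def by blast

lemma rot: fixes w i j n :: nat assumes "w < n" "i < n" "j < n" "n \<ge> 3"
  shows "(let u = (if w + i < n then w + i else w + i - n); v = (if w + j < n then w + j else w + j - n) in
      u \<noteq> v \<and> (u + 1 = v \<or> v + 1 = u \<or> (u = n - 1 \<and> v = 0) \<or> (v = n - 1 \<and> u = 0)))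
   \<longleftrightarrow> i \<noteq> j \<and> (i + 1 = j \<or> j + 1 = i \<or> (i = n - 1 \<and> j = 0) \<or> (j = n - 1 \<and> i = 0))"
  using assms unfolding Let_def by (split if_split)+ arith

lemma not3:
  assumes n: "n \<ge> 5"
  shows "\<not> k_threshold_graph 3 {0..<n} (cycle_edge n)"
proof
  assume "k_threshold_graph 3 {0..<n} (cycle_edge n)"
  then obtain \<theta> r where inc: "\<forall>i j. i < j \<and> j < 3 \<longrightarrow> \<theta> i < \<theta> j"
    and rep: "threshold_rep {0..<n} (cycle_edge n) 3 \<theta> r"
    unfolding k_threshold_graph_def by blast
  have t01: "\<theta> 0 < \<theta> 1" and t12: "\<theta> 1 < \<theta> 2" using inc by auto
  define M where "M = Max (r ` {0..<n})"
  have "M \<in> r ` {0..<n}" unfolding M_def using n by (intro Max_in) auto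
  then obtain w where w: "w < n" "r w = M" by auto
  have rM: "r v \<le> r w" if "v < n" for v using that w unfolding M_def by (auto intro!: Max_ge)
  define rt where "rt i = (if w + i < n then w + i else w + i - n)" for i
  define q where "q i = r (rt i)" for i
  have rtn: "rt i < n" if "i < n" for i using that w unfolding rt_def by auto
  have rtinj: "rt i \<noteq> rt j" if "i < n" "j < n" "i \<noteq> j" for i j using that w unfolding rt_def by auto
  show False
  proof (rule no3_core[of n "\<theta> 0" "\<theta> 1" "\<theta> 2" q])
    show "5 \<le> n" "\<theta> 0 < \<theta> 1" "\<theta> 1 < \<theta> 2" by fact+
    fix i j assume ij: "i < n" "j < n" "i \<noteq> j"
    have "cycle_edge n (rt i) (rt j) \<longleftrightarrow> EC n i j"
      using cyc'[OF rtn[OF ij(1)] rtn[OF ij(2)]] rot[OF w(1) ij(1) ij(2)] n ij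
      unfolding EC_def rt_def Let_def by auto
    moreover have "cycle_edge n (rt i) (rt j) \<longleftrightarrow> odd (card {k. k < 3 \<and> \<theta> k \<le> r (rt i) + r (rt j)})"
      using rep rtn[OF ij(1)] rtn[OF ij(2)] rtinj[OF ij] unfolding threshold_rep_def by auto
    ultimately show "EC n i j \<longleftrightarrow> ((\<theta> 0 \<le> q i + q j \<and> q i + q j < \<theta> 1) \<or> \<theta> 2 \<le> q i + q j)"
      using card3[OF t01 t12] unfolding q_def by simp
  next
    fix i assume "i < n"
    then show "q i \<le> q 0" unfolding q_def using rtn rM w unfolding rt_def by auto
  qed
qed

lemma four_even:
  assumes t: "t \<ge> 3"
  shows "k_threshold_graph 4 {0..<2*t} (cycle_edge (2*t))"
proof -
  define \<theta> :: "nat \<Rightarrow> real" where "\<theta> i = of_int (if i = 0 then 3 * int t + 11 else if i = 1 then 3 * int t + 12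
     else if i = 2 then 4 * int t + 10 else 4 * int t + 12)" for i
  define r :: "nat \<Rightarrow> real" where "r v = of_int (RE t v)" for v
  have inc: "\<forall>i j. i < j \<and> j < 4 \<longrightarrow> \<theta> i < \<theta> j"
  proof (intro allI impI)
    fix i j :: nat assume "i < j \<and> j < 4"
    then have "(i = 0 \<or> i = 1 \<or> i = 2) \<and> (j = 1 \<or> j = 2 \<or> j = 3)" by auto
    then show "\<theta> i < \<theta> j" using \<open>i < j \<and> j < 4\<close> t unfolding \<theta>_def by auto
  qed
  have c4: "odd (card {i. i < 4 \<and> \<theta> i \<le> s}) \<longleftrightarrow> (\<theta> 0 \<le> s \<and> s < \<theta> 1) \<or> (\<theta> 2 \<le> s \<and> s < \<theta> 3)" for s
    by (rule card4) (use inc in auto)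
  have rep: "threshold_rep {0..<2*t} (cycle_edge (2*t)) 4 \<theta> r"
    unfolding threshold_rep_def
  proof (intro ballI impI)
    fix u v assume uv: "u \<in> {0..<2*t}" "v \<in> {0..<2*t}" "u \<noteq> v"
    have "cycle_edge (2*t) u v \<longleftrightarrow> PE t (RE t u + RE t v)"
      using cyc'[of u "2*t" v] even_all[OF t, of u v] uv t by auto
    also have "\<dots> \<longleftrightarrow> odd (card {i. i < 4 \<and> \<theta> i \<le> r u + r v})"
    proof -
      have th0: "\<theta> 0 = of_int (3 * int t + 11)" unfolding \<theta>_def by simp
      have th1: "\<theta> 1 = of_int (3 * int t + 12)" unfolding \<theta>_def by simp
      have th2: "\<theta> 2 = of_int (4 * int t + 10)" unfolding \<theta>_def by simp
      have th3: "\<theta> 3 = of_int (4 * int t + 12)" unfolding \<theta>_def by simp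
      have rs: "r u + r v = of_int (RE t u + RE t v)" unfolding r_def by simp
      show ?thesis unfolding c4 th0 th1 th2 th3 rs PE_def by (simp only: of_int_le_iff of_int_less_iff)
    qed
    finally show "cycle_edge (2*t) u v = odd (card {i. i < 4 \<and> \<theta> i \<le> r u + r v})" .
  qed
  show ?thesis unfolding k_threshold_graph_def using inc rep by blast
qed

lemma four_odd:
  assumes t: "t \<ge> 2"
  shows "k_threshold_graph 4 {0..<2*t+1} (cycle_edge (2*t+1))"
proof -
  define \<theta> :: "nat \<Rightarrow> real" where "\<theta> i = of_int (if i = 0 then 5 * int t + 1 else if i = 1 then 5 * int t + 2
     else if i = 2 then 5 * (4 * int t + 12) else 5 * (4 * int t + 12) + 10)" for i
  define r :: "nat \<Rightarrow> real" where "r v = of_int (RO t v)" for v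
  have inc: "\<forall>i j. i < j \<and> j < 4 \<longrightarrow> \<theta> i < \<theta> j"
  proof (intro allI impI)
    fix i j :: nat assume "i < j \<and> j < 4"
    then have "(i = 0 \<or> i = 1 \<or> i = 2) \<and> (j = 1 \<or> j = 2 \<or> j = 3)" by auto
    then show "\<theta> i < \<theta> j" using \<open>i < j \<and> j < 4\<close> t unfolding \<theta>_def by auto
  qed
  have c4: "odd (card {i. i < 4 \<and> \<theta> i \<le> s}) \<longleftrightarrow> (\<theta> 0 \<le> s \<and> s < \<theta> 1) \<or> (\<theta> 2 \<le> s \<and> s < \<theta> 3)" for s
    by (rule card4) (use inc in auto)
  have rep: "threshold_rep {0..<2*t+1} (cycle_edge (2*t+1)) 4 \<theta> r"
    unfolding threshold_rep_def
  proof (intro ballI impI)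
    fix u v assume uv: "u \<in> {0..<2*t+1}" "v \<in> {0..<2*t+1}" "u \<noteq> v"
    have "cycle_edge (2*t+1) u v \<longleftrightarrow> PO t (RO t u + RO t v)"
      using cyc'[of u "2*t+1" v] odd_all[OF t, of u v] uv t by auto
    also have "\<dots> \<longleftrightarrow> odd (card {i. i < 4 \<and> \<theta> i \<le> r u + r v})"
    proof -
      have th0: "\<theta> 0 = of_int (5 * int t + 1)" unfolding \<theta>_def by simp
      have th1: "\<theta> 1 = of_int (5 * int t + 2)" unfolding \<theta>_def by simp
      have th2: "\<theta> 2 = of_int (5 * (4 * int t + 12))" unfolding \<theta>_def by simp
      have th3: "\<theta> 3 = of_int (5 * (4 * int t + 12) + 10)" unfolding \<theta>_def by simp
      have rs: "r u + r v = of_int (RO t u + RO t v)" unfolding r_def by simp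
      show ?thesis unfolding c4 th0 th1 th2 th3 rs PO_def by (simp only: of_int_le_iff of_int_less_iff)
    qed
    finally show "cycle_edge (2*t+1) u v = odd (card {i. i < 4 \<and> \<theta> i \<le> r u + r v})" .
  qed
  show ?thesis unfolding k_threshold_graph_def using inc rep by blast
qed

lemma four:
  assumes "n \<ge> 5"
  shows "k_threshold_graph 4 {0..<n} (cycle_edge n)"
proof (cases "even n")
  case True
  then obtain t where "n = 2 * t" by blast
  then show ?thesis using four_even[of t] assms by auto
next
  case False
  then obtain t where "n = 2 * t + 1" using oddE by blast
  then show ?thesis using four_odd[of t] assms by auto
qed

lemma C3: "k_threshold_graph 1 {0..<3} (cycle_edge 3)"
proof -
  have "threshold_rep {0..<3} (cycle_edge 3) 1 (\<lambda>_. 0) (\<lambda>_. 1)"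
    unfolding threshold_rep_def
  proof (intro ballI impI)
    fix u v :: nat assume uv: "u \<in> {0..<3}" "v \<in> {0..<3}" "u \<noteq> v"
    have ce: "cycle_edge 3 u v" using cyc'[of u 3 v] uv unfolding EC_def by auto
    have eq: "{i::nat. i < 1 \<and> (0::real) \<le> 1 + 1} = {0}" by auto
    show "cycle_edge 3 u v = odd (card {i::nat. i < 1 \<and> (0::real) \<le> 1 + 1})" using ce by (simp add: lessThan_def[symmetric])
  qed
  then show ?thesis unfolding k_threshold_graph_def by auto
qed

lemma C4_2: "k_threshold_graph 2 {0..<4} (cycle_edge 4)"
proof -
  define r :: "nat \<Rightarrow> real" where "r v = (if v = 0 then 0 else if v = 1 then 10 else if v = 2 then 1 else 9)" for v
  define \<theta> :: "nat \<Rightarrow> real" where "\<theta> i = (if i = 0 then 9 else 12)" for i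
  have "threshold_rep {0..<4} (cycle_edge 4) 2 \<theta> r"
    unfolding threshold_rep_def
  proof (intro ballI impI)
    fix u v :: nat assume uv: "u \<in> {0..<4}" "v \<in> {0..<4}" "u \<noteq> v"
    have c: "odd (card {i. i < 2 \<and> \<theta> i \<le> s}) \<longleftrightarrow> 9 \<le> s \<and> s < 12" for s
      using card2[of \<theta> s] unfolding \<theta>_def by simp
    have "u = 0 \<or> u = 1 \<or> u = 2 \<or> u = 3" "v = 0 \<or> v = 1 \<or> v = 2 \<or> v = 3" using uv by auto
    then show "cycle_edge 4 u v = odd (card {i. i < 2 \<and> \<theta> i \<le> r u + r v})"
      unfolding c using cyc'[of u 4 v] uv unfolding EC_def r_def by auto
  qed
  moreover have "\<forall>i j. i < j \<and> j < 2 \<longrightarrow> \<theta> i < \<theta> j" unfolding \<theta>_def by auto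
  ultimately show ?thesis unfolding k_threshold_graph_def by blast
qed

lemma C4_not1: "\<not> k_threshold_graph 1 {0..<4} (cycle_edge 4)"
proof
  assume "k_threshold_graph 1 {0..<4} (cycle_edge 4)"
  then obtain \<theta> r where rep: "threshold_rep {0..<4} (cycle_edge 4) 1 \<theta> r"
    unfolding k_threshold_graph_def by blast
  have R: "cycle_edge 4 u v \<longleftrightarrow> \<theta> 0 \<le> r u + r v" if "u < 4" "v < 4" "u \<noteq> v" for u v
    using rep that card1[of \<theta>] unfolding threshold_rep_def by auto
  have E: "cycle_edge 4 0 1" "cycle_edge 4 2 3" "\<not> cycle_edge 4 0 2" "\<not> cycle_edge 4 1 3"
    unfolding cycle_edge_def by auto
  show False using R[of 0 1] R[of 2 3] R[of 0 2] R[of 1 3] E by linarith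
qed

theorem theorem1:
  fixes n :: nat
  assumes "n \<ge> 3"
  shows "threshold_number {0..<n} (cycle_edge n) =
           (if n = 3 then 1 else if n = 4 then 2 else 4)"
proof -
  have fin: "finite {0..<n}" by simp
  consider "n = 3" | "n = 4" | "n \<ge> 5" using assms by linarith
  then show ?thesis
  proof cases
    case 1
    show ?thesis unfolding threshold_number_def using 1 C3
      by (intro Least_equality) auto
  next
    case 2
    have "2 \<le> k" if "0 < k" "k_threshold_graph k {0..<4} (cycle_edge 4)" for k :: nat
      using that C4_not1 by (cases "k = 1") auto
    then show ?thesis unfolding threshold_number_def using 2 C4_2
      by (intro Least_equality) auto
  next
    case 3
    have "4 \<le> k" if "0 < k" "k_threshold_graph k {0..<n} (cycle_edge n)" for k :: nat
    proof (rule ccontr)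
      assume "\<not> 4 \<le> k"
      then have "k = 1 \<or> k = 2 \<or> k = 3" using that by auto
      then have "k_threshold_graph 3 {0..<n} (cycle_edge n)"
        using that kt_mono[OF fin] by (metis One_nat_def Suc_1 numeral_3_eq_3 zero_less_Suc)
      then show False using not3[OF 3] by simp
    qed
    then show ?thesis unfolding threshold_number_def using 3 four[OF 3]
      by (intro Least_equality) auto
  qed
qed

end
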